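(* Fix $\kappa>0$ and $0<L<U<\infty$; let $a=(1+U)^{-1}$, $b=(1+L)^{-1}$, $I=[a,b]$, $z_0=(a+b)/2$, $\Delta=(b-a)/2$. For a measurable $\psi:[0,\infty)\to\mathbb R$ with $\|\psi\|_\infty\le1$, let $T_\psi(z)=\int_0^\infty\psi(\theta)\frac{\theta^{\kappa-1}}{\Gamma(\kappa)}\left(\frac{1-z}{z}\right)^\kappa e^{-\theta(1-z)/z}d\theta$ for $z\in I$, $R_\psi(z)=(1-z)^{-\kappa}T_\psi(z)$, and $q_\psi(u)=R_\psi(z_0+\Delta u)$ for $u\in[-1,1]$. Then there exist a constant $C>0$ depending only on $(\kappa,L,U)$ and a constant $\rho\in(0,1)$ depending only on $(L,U)$ such that, for every integer $m\ge2$ and every such $\psi$, there is a polynomial $p_{m,\psi}(u)=\sum_{j=0}^m d^{(m)}_{\psi,j}u^j$ of degree at most $m$ satisfying $$\sup_{u\in[-1,1]}|q_\psi(u)-p_{m,\psi}(u)|\le C\rho^m\qquad\text{and}\qquad|d^{(m)}_{\psi,j}|\le C\frac{m^j}{j!},\quad j=0,\dots,m.$$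
   Context: $\|\psi\|_\infty$ is the supremum norm. *)

theory Defs
  imports "HOL-Analysis.Analysis"
begin

definition endA :: "real \<Rightarrow> real" where "endA U = 1 / (1 + U)"
definition endB :: "real \<Rightarrow> real" where "endB L = 1 / (1 + L)"
definition zc :: "real \<Rightarrow> real \<Rightarrow> real" where "zc L U = (endA U + endB L) / 2"
definition halfw :: "real \<Rightarrow> real \<Rightarrow> real" where "halfw L U = (endB L - endA U) / 2"

definition T_psi :: "real \<Rightarrow> (real \<Rightarrow> real) \<Rightarrow> real \<Rightarrow> real" where
  "T_psi \<kappa> \<psi> z = (LINT \<theta>:{0..}|lborel.
      \<psi> \<theta> * (\<theta> powr (\<kappa> - 1) / Gamma \<kappa>) * ((1 - z) / z) powr \<kappa> * exp (- \<theta> * (1 - z) / z))"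

definition R_psi :: "real \<Rightarrow> (real \<Rightarrow> real) \<Rightarrow> real \<Rightarrow> real" where
  "R_psi \<kappa> \<psi> z = (1 - z) powr (- \<kappa>) * T_psi \<kappa> \<psi> z"

definition q_psi :: "real \<Rightarrow> real \<Rightarrow> real \<Rightarrow> (real \<Rightarrow> real) \<Rightarrow> real \<Rightarrow> real" where
  "q_psi \<kappa> L U \<psi> u = R_psi \<kappa> \<psi> (zc L U + halfw L U * u)"

end

theory Submission imports Defs "HOL-Complex_Analysis.Complex_Analysis" "HOL-Real_Asymp.Real_Asymp" begin


lemma gamma_int:
  assumes k: "\<kappa> > 0" and d: "\<delta> > 0"
  shows "integrable lborel (\<lambda>\<theta>::real. indicator {0..} \<theta> * (\<theta> powr (\<kappa>-1) * exp(-\<delta>*\<theta>)))"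
proof -
  have A: "(\<lambda>t. complex_of_real t powr (complex_of_real \<kappa> - 1) / of_real (exp (\<delta> * t)))
             absolutely_integrable_on {0<..}"
    using absolutely_integrable_Gamma_integral[of "complex_of_real \<kappa>" \<delta>] k d by simp
  have B: "(\<lambda>t. complex_of_real (t powr (\<kappa> - 1) * exp (-\<delta> * t))) absolutely_integrable_on {0<..}"
  proof -
    have "?thesis = ((\<lambda>t. complex_of_real t powr (complex_of_real \<kappa> - 1) / of_real (exp (\<delta> * t)))
             absolutely_integrable_on {0<..})"
    proof (rule set_integrable_cong[OF refl refl])
    fix t :: real assume "t \<in> {0<..}"
    then show "complex_of_real (t powr (\<kappa> - 1) * exp (-\<delta> * t)) = complex_of_real t powr (complex_of_real \<kappa> - 1) / of_real (exp (\<delta> * t))"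
      using powr_of_real[of t "\<kappa> - 1"] by (simp add: exp_minus divide_inverse)
  qed
  then show ?thesis using A by simp
  qed
  have D: "integrable lebesgue (\<lambda>t. indicator {0<..} t * (t powr (\<kappa> - 1) * exp (-\<delta> * t)))"
    using B unfolding set_integrable_def
    using complex_of_real_integrable_eq[of lebesgue "(\<lambda>t. indicator {0<..} t * (t powr (\<kappa> - 1) * exp (-\<delta> * t)))"]
    by (simp add: scaleR_conv_of_real)
  have E: "integrable lborel (\<lambda>t. indicator {0<..} t * (t powr (\<kappa> - 1) * exp (-\<delta> * t)))"
    using D integrable_completion[of "(\<lambda>t. indicator {0<..} t * (t powr (\<kappa> - 1) * exp (-\<delta> * t)))" lborel]
    by simp
  have "(\<lambda>\<theta>::real. indicator {0..} \<theta> * (\<theta> powr (\<kappa>-1) * exp(-\<delta>*\<theta>))) = 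
     (\<lambda>t. indicator {0<..} t * (t powr (\<kappa> - 1) * exp (-\<delta> * t)))"
    by (auto simp: indicator_def fun_eq_iff)
  then show ?thesis using E by simp
qed



lemma coeff_bound:
  fixes f :: "complex \<Rightarrow> complex"
  assumes hol: "f holomorphic_on ball 0 R" and r: "0 < r" "r < R"
    and B: "\<And>x. norm x \<le> r \<Longrightarrow> norm (f x) \<le> B"
  shows "norm ((deriv^^j) f 0 / fact j) \<le> B / r^j"
proof -
  have "norm ((deriv ^^ j) f 0) \<le> (fact j) * B / r^j"
  proof (rule Cauchy_inequality)
    show "f holomorphic_on ball 0 r" by (rule holomorphic_on_subset[OF hol]) (use r in auto)
    show "continuous_on (cball 0 r) f"
      by (rule continuous_on_subset[OF holomorphic_on_imp_continuous_on[OF hol]]) (use r in auto)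
    show "0 < r" by fact
    fix x :: complex assume "norm (0 - x) = r" then show "norm (f x) \<le> B" using B by simp
  qed
  then show ?thesis by (simp add: norm_divide field_simps)
qed

lemma taylor_err:
  fixes f :: "complex \<Rightarrow> complex"
  assumes hol: "f holomorphic_on ball 0 R" and r: "1 < r" "r < R"
    and B: "\<And>x. norm x \<le> r \<Longrightarrow> norm (f x) \<le> B"
    and u: "norm u \<le> 1"
  shows "norm (f u - (\<Sum>j\<le>m. (deriv^^j) f 0 / fact j * u^j)) \<le> B * (1/r)^(Suc m) / (1 - 1/r)"
proof -
  have uR: "u \<in> ball 0 R" using u r by auto
  have S: "(\<lambda>n. (deriv ^^ n) f 0 / fact n * u^n) sums f u"
    using holomorphic_power_series[OF hol uR] by simp
  have S2: "(\<lambda>n. (deriv ^^ (n + Suc m)) f 0 / fact (n + Suc m) * u^(n + Suc m)) sums (f u - (\<Sum>j<Suc m. (deriv^^j) f 0 / fact j * u^j))"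
    using sums_split_initial_segment[OF S, of "Suc m"] by simp
  have B0: "0 \<le> B" using B[of 0] r by (smt (verit) norm_ge_zero norm_zero)
  have bd: "norm ((deriv ^^ (n + Suc m)) f 0 / fact (n + Suc m) * u^(n + Suc m)) \<le> B * (1/r)^(n + Suc m)" for n
  proof -
    have "norm ((deriv ^^ (n + Suc m)) f 0 / fact (n + Suc m) * u^(n + Suc m))
       = norm ((deriv ^^ (n + Suc m)) f 0 / fact (n + Suc m)) * norm u ^(n + Suc m)"
      by (simp only: norm_mult norm_power)
    also have "\<dots> \<le> B / r^(n + Suc m) * 1"
      apply (rule mult_mono[OF coeff_bound[OF hol _ r(2) B]])
      using r u B0 by (auto simp: power_le_one simp del: power_Suc intro!: power_le_one)
    finally show ?thesis by (simp add: power_divide)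
  qed
  have G: "(\<lambda>n. B * (1/r)^(n + Suc m)) sums (B * (1/r)^(Suc m) / (1 - 1/r))"
  proof -
    have "(\<lambda>n. (1/r)^n) sums (1 / (1 - 1/r))" by (rule geometric_sums) (use r in auto)
    from sums_mult[OF this, of "B * (1/r)^Suc m"] show ?thesis
      by (simp add: power_add field_simps)
  qed
  have "norm (f u - (\<Sum>j<Suc m. (deriv^^j) f 0 / fact j * u^j)) \<le> B * (1/r)^(Suc m) / (1 - 1/r)"
    using norm_suminf_le[OF bd sums_summable[OF G]] sums_unique[OF S2] sums_unique[OF G] by simp
  then show ?thesis using lessThan_Suc_atMost by simp
qed

lemma meas_deriv:
  fixes g :: "'a \<Rightarrow> complex \<Rightarrow> complex"
  assumes hol: "\<And>\<theta>. g \<theta> holomorphic_on ball 0 R"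
    and meas: "\<And>u. u \<in> ball 0 R \<Longrightarrow> (\<lambda>\<theta>. g \<theta> u) \<in> borel_measurable M"
  shows "u \<in> ball 0 R \<Longrightarrow> (\<lambda>\<theta>. (deriv^^j) (g \<theta>) u) \<in> borel_measurable M"
proof (induction j arbitrary: u)
  case 0 then show ?case using meas by simp
next
  case (Suc j)
  define e where "e = R - norm u"
  have e: "e > 0" using Suc.prems e_def by auto
  define h where "h = (\<lambda>i::nat. complex_of_real (e / (real i + 2)))"
  have hin: "u + h i \<in> ball 0 R" for i
  proof -
    have "norm (h i) = e / (real i + 2)" unfolding h_def norm_of_real using e by simp
    also have "\<dots> < e" using e by (simp add: field_simps add_pos_nonneg)
    finally have "norm (u + h i) < norm u + e" using norm_triangle_lt by (smt (verit) norm_triangle_ineq)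
    then show ?thesis using e_def by simp
  qed
  have hne: "h i \<noteq> 0" for i
  proof -
    have "e/(real i+2) > 0" using e by (simp add: add_pos_nonneg)
    then show ?thesis unfolding h_def by (metis of_real_eq_0_iff less_irrefl)
  qed
  have h0: "h \<longlonglongrightarrow> 0"
  proof -
    have "(\<lambda>i. e / (real i + 2)) \<longlonglongrightarrow> 0"
      by real_asymp
    then show ?thesis unfolding h_def by (metis of_real_0 tendsto_of_real)
  qed
  show ?case
  proof (rule borel_measurable_LIMSEQ_metric)
    fix i
    show "(\<lambda>\<theta>. ((deriv^^j) (g \<theta>) (u + h i) - (deriv^^j) (g \<theta>) u) / h i) \<in> borel_measurable M"
      using Suc.IH[OF hin] Suc.IH[OF Suc.prems] by measurable
  next
    fix \<theta> assume "\<theta> \<in> space M"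
    have hd: "(deriv^^j) (g \<theta>) holomorphic_on ball 0 R"
      by (rule holomorphic_higher_deriv[OF hol]) auto
    have "((deriv^^j) (g \<theta>) has_field_derivative deriv ((deriv^^j) (g \<theta>)) u) (at u)"
      by (rule holomorphic_derivI[OF hd _ Suc.prems]) auto
    then have L: "((\<lambda>y. ((deriv^^j) (g \<theta>) y - (deriv^^j) (g \<theta>) u) / (y - u)) \<longlongrightarrow> deriv ((deriv^^j) (g \<theta>)) u) (at u)"
      by (simp add: has_field_derivative_iff)
    have F: "filterlim (\<lambda>i. u + h i) (at u) sequentially"
    proof (rule filterlim_atI)
      show "((\<lambda>i. u + h i) \<longlongrightarrow> u) sequentially" using tendsto_add[OF tendsto_const h0, of u] by simp
      show "\<forall>\<^sub>F i in sequentially. u + h i \<noteq> u" using hne by simp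
    qed
    have "((\<lambda>i. ((deriv^^j) (g \<theta>) (u + h i) - (deriv^^j) (g \<theta>) u) / ((u + h i) - u)) \<longlongrightarrow> deriv ((deriv^^j) (g \<theta>)) u) sequentially"
      using filterlim_compose[OF L F] by (simp add: o_def)
    then show "(\<lambda>i. ((deriv^^j) (g \<theta>) (u + h i) - (deriv^^j) (g \<theta>) u) / h i) \<longlonglongrightarrow> (deriv^^Suc j) (g \<theta>) u"
      by simp
  qed
qed



definition Zc :: "real \<Rightarrow> real \<Rightarrow> complex \<Rightarrow> complex" where
  "Zc L U u = complex_of_real (zc L U) + complex_of_real (halfw L U) * u"

definition gk :: "real \<Rightarrow> real \<Rightarrow> real \<Rightarrow> real \<Rightarrow> complex \<Rightarrow> complex" where
  "gk \<kappa> L U \<theta> u = complex_of_real (\<theta> powr (\<kappa>-1) / Gamma \<kappa>) * (Zc L U u) powr (complex_of_real (-\<kappa>))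
     * exp (- complex_of_real \<theta> * (1 - Zc L U u) / Zc L U u)"

lemma geom:
  assumes "0 < L" "L < U"
  shows "0 < endA U" "endA U < endB L" "endB L < 1" "halfw L U > 0"
    "zc L U - halfw L U = endA U" "zc L U + halfw L U = endB L"
    "\<bar>zc L U - 1/2\<bar> + halfw L U = 1/2 - min (endA U) (1 - endB L)"
    "min (endA U) (1 - endB L) > 0"
proof -
  show A: "0 < endA U" using assms by (simp add: endA_def)
  show B: "endA U < endB L" using assms by (simp add: endA_def endB_def frac_less2)
  show C: "endB L < 1" using assms by (simp add: endB_def)
  show "halfw L U > 0" using B by (simp add: halfw_def)
  show "zc L U - halfw L U = endA U" "zc L U + halfw L U = endB L" by (simp_all add: zc_def halfw_def field_simps)
  show "\<bar>zc L U - 1/2\<bar> + halfw L U = 1/2 - min (endA U) (1 - endB L)"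
    by (simp add: zc_def halfw_def min_def abs_if field_simps) 
  show "min (endA U) (1 - endB L) > 0" using A C by simp
qed

lemma Zc_norm: assumes "halfw L U > 0"
  shows "norm (Zc L U u - 1/2) \<le> \<bar>zc L U - 1/2\<bar> + halfw L U * norm u"
proof -
  have "Zc L U u - 1/2 = complex_of_real (zc L U - 1/2) + complex_of_real (halfw L U) * u"
    by (simp add: Zc_def)
  also have "norm \<dots> \<le> norm (complex_of_real (zc L U - 1/2)) + norm (complex_of_real (halfw L U) * u)"
    by (rule norm_triangle_ineq)
  also have "\<dots> = \<bar>zc L U - 1/2\<bar> + halfw L U * norm u" using assms by (simp only: norm_mult norm_of_real abs_of_pos)
  finally show ?thesis .
qed

lemma half_disc_Re:
  fixes z :: complex
  assumes "norm (z - 1/2) < 1/2"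
  shows "Re z > 0"
proof -
  have "\<bar>Re (z - 1/2)\<bar> \<le> norm (z - 1/2)" by (rule abs_Re_le_cmod)
  then show ?thesis using assms by auto
qed

lemma half_disc_bounds:
  fixes z :: complex
  assumes "norm (z - 1/2) \<le> s" "0 \<le> s" "s < 1/2"
  shows "norm z \<ge> 1/2 - s" "norm z \<le> 1" "Re (1/z) \<ge> 1 + (1/4 - s^2)"
proof -
  define x where "x = Re z"
  define y where "y = Im z"
  have n2: "(norm z)^2 = x^2 + y^2" by (simp add: x_def y_def cmod_power2)
  have "(norm (z - 1/2))^2 = (x - 1/2)^2 + y^2" by (simp add: x_def y_def cmod_power2)
  then have D: "(x - 1/2)^2 + y^2 \<le> s^2" using power_mono[OF assms(1) norm_ge_zero, of 2] by simp
  have "norm (1/2::complex) - norm z \<le> norm (1/2 - z)" by (rule norm_triangle_ineq2)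
  moreover have "norm (1/2 - z) = norm (z - 1/2)" by (rule norm_minus_commute)
  ultimately have "norm z \<ge> norm (1/2::complex) - norm (z - 1/2)" by simp
  then show "norm z \<ge> 1/2 - s" using assms by simp
  have "s^2 < (1/2)^2" using assms by (intro power_strict_mono) auto
  then have s4: "1/4 - s^2 > 0" by (simp add: power_divide)
  then have s2: "s^2 \<le> 1/4" by simp
  have ex: "(x-1/2)^2 = x^2 - x + 1/4" by (simp add: power2_eq_square algebra_simps)
  have xpos: "x \<ge> x^2 + y^2 + (1/4 - s^2)" using D ex by linarith
  have xy: "x^2 + y^2 \<le> x" using xpos s4 by linarith
  have h4: "(1/2::real)^2 = 1/4" by (simp add: power2_eq_square)
  have "(x - 1/2)^2 \<le> (1/2)^2" using D s2 zero_le_power2[of y] h4 by linarith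
  then have "\<bar>x - 1/2\<bar> \<le> \<bar>1/2\<bar>" using abs_le_square_iff by blast
  then have x1: "x \<le> 1" by (simp add: abs_if split: if_splits)
  have "(norm z)^2 \<le> 1" using n2 xy x1 by linarith
  then show "norm z \<le> 1" by (simp add: power_le_one_iff)
  have pos: "x^2 + y^2 > 0" 
  proof -
    have "x > 0" using xpos s4 zero_le_power2[of x] zero_le_power2[of y] by linarith
    then show ?thesis by (simp add: add_pos_nonneg)
  qed
  have Re1: "Re (1/z) = x / (x^2 + y^2)" by (simp add: Re_divide x_def y_def)
  have "(1 + (1/4 - s^2)) * (x^2 + y^2) \<le> x"
  proof -
    have "(1/4 - s^2) * (x^2 + y^2) \<le> (1/4 - s^2)"
      by (rule mult_left_le) (use xy x1 s4 in linarith)+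
    moreover have "(1 + (1/4 - s^2)) * (x^2 + y^2) = (x^2 + y^2) + (1/4 - s^2) * (x^2 + y^2)"
      by (simp add: ring_distribs)
    ultimately show ?thesis using xpos by linarith
  qed
  then show "Re (1/z) \<ge> 1 + (1/4 - s^2)" unfolding Re1 by (simp add: pos_le_divide_eq[OF pos])
qed



lemma Zc_R:
  assumes "0 < L" "L < U" "norm u < 1 + min (endA U) (1 - endB L) / halfw L U"
  shows "norm (Zc L U u - 1/2) < 1/2"
proof -
  note g = geom[OF assms(1,2)]
  have "halfw L U * norm u < halfw L U * (1 + min (endA U) (1 - endB L) / halfw L U)"
    using assms(3) g(4) by (intro mult_strict_left_mono) auto
  also have "\<dots> = halfw L U + min (endA U) (1 - endB L)" using g(4) by (simp add: field_simps)
  finally show ?thesis using Zc_norm[OF g(4), of u] g(7) by linarith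
qed

lemma lin_aux: "(h::real) * n \<le> h + m / 2 \<Longrightarrow> nz \<le> c + h * n \<Longrightarrow> c + h = 1/2 - m \<Longrightarrow> nz \<le> 1/2 - m/2"
  by linarith

lemma Zc_r:
  assumes "0 < L" "L < U" "norm u \<le> 1 + min (endA U) (1 - endB L) / (2 * halfw L U)"
  shows "norm (Zc L U u - 1/2) \<le> 1/2 - min (endA U) (1 - endB L) / 2"
proof -
  note g = geom[OF assms(1,2)]
  have "halfw L U * norm u \<le> halfw L U * (1 + min (endA U) (1 - endB L) / (2 * halfw L U))"
    using assms(3) g(4) by (intro mult_left_mono) auto
  also have "\<dots> = halfw L U + min (endA U) (1 - endB L) / 2" using g(4) by (simp add: field_simps)
  finally show ?thesis by (rule lin_aux[OF _ Zc_norm[OF g(4), of u] g(7)])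
qed

lemma gk_hol:
  assumes "0 < L" "L < U"
  shows "gk \<kappa> L U \<theta> holomorphic_on ball 0 (1 + min (endA U) (1 - endB L) / halfw L U)"
proof -
  have Re: "Re (Zc L U u) > 0" if "u \<in> ball 0 (1 + min (endA U) (1 - endB L) / halfw L U)" for u
    using half_disc_Re[OF Zc_R[OF assms]] that by simp
  have nz: "Zc L U u \<notin> \<real>\<^sub>\<le>\<^sub>0" "Zc L U u \<noteq> 0" if "u \<in> ball 0 (1 + min (endA U) (1 - endB L) / halfw L U)" for u
    using Re[OF that] by (auto simp: complex_nonpos_Reals_iff)
  show ?thesis unfolding gk_def Zc_def
    using nz unfolding Zc_def
    by (intro holomorphic_intros) auto
qed

lemma gk_bound:
  assumes "0 < L" "L < U" "\<kappa> > 0" "\<theta> \<ge> 0"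
    and u: "norm u \<le> 1 + min (endA U) (1 - endB L) / (2 * halfw L U)"
  shows "norm (gk \<kappa> L U \<theta> u) \<le> \<theta> powr (\<kappa>-1) / Gamma \<kappa> * (min (endA U) (1 - endB L) / 2) powr (-\<kappa>)
           * exp (- (1/4 - (1/2 - min (endA U) (1 - endB L) / 2)^2) * \<theta>)"
proof -
  define \<mu> where "\<mu> = min (endA U) (1 - endB L)"
  note g = geom[OF assms(1,2)]
  have \<mu>: "\<mu> > 0" "\<mu> < 1" using g(1-3) by (auto simp: \<mu>_def)
  define z where "z = Zc L U u"
  have zs: "norm (z - 1/2) \<le> 1/2 - \<mu>/2" using Zc_r[OF assms(1,2) u] by (simp add: z_def \<mu>_def)
  have s0: "0 \<le> 1/2 - \<mu>/2" "1/2 - \<mu>/2 < 1/2" using \<mu> by auto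
  note hb = half_disc_bounds[OF zs s0]
  have z0: "z \<noteq> 0" using hb(1) \<mu> by auto
  have G: "Gamma \<kappa> > 0" using assms(3) by (rule Gamma_real_pos)
  have n1: "norm (complex_of_real (\<theta> powr (\<kappa>-1) / Gamma \<kappa>)) = \<theta> powr (\<kappa>-1) / Gamma \<kappa>"
    by (simp only: norm_of_real) (use G in simp)
  have n2: "norm (z powr complex_of_real (-\<kappa>)) \<le> (\<mu>/2) powr (-\<kappa>)"
  proof -
    have "norm (z powr complex_of_real (-\<kappa>)) = norm z powr (-\<kappa>)"
      by (subst norm_powr_real_powr') auto
    also have "\<dots> \<le> (\<mu>/2) powr (-\<kappa>)"
      by (rule powr_mono2') (use assms(3) \<mu> hb(1) in auto)
    finally show ?thesis .
  qed
  have n3: "norm (exp (- complex_of_real \<theta> * (1 - z) / z)) \<le> exp (- (1/4 - (1/2 - \<mu>/2)^2) * \<theta>)"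
  proof -
    have e: "- complex_of_real \<theta> * (1 - z) / z = - complex_of_real \<theta> * (1/z) + complex_of_real \<theta>"
      using z0 by (simp add: field_simps)
    have "Re (- complex_of_real \<theta> * (1 - z) / z) = - \<theta> * Re (1/z) + \<theta>"
      unfolding e by (simp add: Re_divide)
    also have "\<dots> \<le> - (1/4 - (1/2 - \<mu>/2)^2) * \<theta>"
    proof -
      have "\<theta> * (1 + (1/4 - (1/2 - \<mu>/2)^2)) \<le> \<theta> * Re (1/z)"
        using hb(3) assms(4) by (intro mult_left_mono) auto
      then show ?thesis by (simp add: algebra_simps)
    qed
    finally show ?thesis by simp
  qed
  have "norm (gk \<kappa> L U \<theta> u) = norm (complex_of_real (\<theta> powr (\<kappa>-1) / Gamma \<kappa>)) *
      norm (z powr complex_of_real (-\<kappa>)) * norm (exp (- complex_of_real \<theta> * (1 - z) / z))"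
    unfolding gk_def z_def by (simp only: norm_mult)
  also have "\<dots> \<le> \<theta> powr (\<kappa>-1) / Gamma \<kappa> * (\<mu>/2) powr (-\<kappa>) * exp (- (1/4 - (1/2 - \<mu>/2)^2) * \<theta>)"
    unfolding n1 using G
    by (intro mult_mono n2 n3 mult_nonneg_nonneg) auto
  finally show ?thesis by (simp add: \<mu>_def)
qed

lemma gk_real:
  assumes "z = zc L U + halfw L U * u" "z > 0"
  shows "gk \<kappa> L U \<theta> (complex_of_real u) = complex_of_real (\<theta> powr (\<kappa>-1) / Gamma \<kappa> * z powr (-\<kappa>) * exp (- \<theta> * (1 - z) / z))"
proof -
  have Z: "Zc L U (complex_of_real u) = complex_of_real z" using assms by (simp add: Zc_def)
  have P: "complex_of_real z powr complex_of_real (-\<kappa>) = complex_of_real (z powr (-\<kappa>))"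
    using powr_of_real[of z "-\<kappa>"] assms(2) by simp
  have E: "exp (- complex_of_real \<theta> * (1 - complex_of_real z) / complex_of_real z) = complex_of_real (exp (- \<theta> * (1 - z) / z))"
    by (simp flip: exp_of_real)
  show ?thesis unfolding gk_def Z P E by simp
qed



theorem lemmaD4:
  fixes L U :: real
  assumes "0 < L" and "L < U"
  shows "\<exists>\<rho>. 0 < \<rho> \<and> \<rho> < 1 \<and>
    (\<forall>\<kappa>::real. \<kappa> > 0 \<longrightarrow>
      (\<exists>C>0. \<forall>m::nat. m \<ge> 2 \<longrightarrow>
        (\<forall>\<psi>::real \<Rightarrow> real. \<psi> \<in> borel_measurable (restrict_space borel {0..}) \<longrightarrow>
           (\<forall>\<theta>\<ge>0. \<bar>\<psi> \<theta>\<bar> \<le> 1) \<longrightarrow>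
           (\<exists>d::nat \<Rightarrow> real.
              (\<forall>u\<in>{-1..1}. \<bar>q_psi \<kappa> L U \<psi> u - (\<Sum>j\<le>m. d j * u ^ j)\<bar> \<le> C * \<rho> ^ m) \<and>
              (\<forall>j\<le>m. \<bar>d j\<bar> \<le> C * real m ^ j / fact j)))))"
proof -
  note g = geom[OF assms]
  define \<mu> where "\<mu> = min (endA U) (1 - endB L)"
  define \<Delta> where "\<Delta> = halfw L U"
  define R where "R = 1 + \<mu> / \<Delta>"
  define r where "r = 1 + \<mu> / (2 * \<Delta>)"
  define \<delta> where "\<delta> = 1/4 - (1/2 - \<mu>/2)^2"
  have \<mu>: "0 < \<mu>" "\<mu> < 1" using g(1-3) by (auto simp: \<mu>_def)
  have \<Delta>: "\<Delta> > 0" using g(4) by (simp add: \<Delta>_def)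
  have r1: "1 < r" using \<mu> \<Delta> by (simp add: r_def)
  have rR: "r < R" using \<mu> \<Delta> by (simp add: r_def R_def field_simps)
  have \<delta>: "\<delta> > 0"
  proof -
    have "(1/2 - \<mu>/2)^2 < (1/2)^2" using \<mu> by (intro power_strict_mono) auto
    then show ?thesis by (simp add: \<delta>_def power_divide)
  qed
  have hol: "gk \<kappa> L U \<theta> holomorphic_on ball 0 R" for \<kappa> \<theta>
    using gk_hol[OF assms] by (simp add: R_def \<mu>_def \<Delta>_def)
  have main: "\<exists>C>0. \<forall>m::nat. m \<ge> 2 \<longrightarrow>
        (\<forall>\<psi>::real \<Rightarrow> real. \<psi> \<in> borel_measurable (restrict_space borel {0..}) \<longrightarrow>
           (\<forall>\<theta>\<ge>0. \<bar>\<psi> \<theta>\<bar> \<le> 1) \<longrightarrow>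
           (\<exists>d::nat \<Rightarrow> real.
              (\<forall>u\<in>{-1..1}. \<bar>q_psi \<kappa> L U \<psi> u - (\<Sum>j\<le>m. d j * u ^ j)\<bar> \<le> C * (1/r) ^ m) \<and>
              (\<forall>j\<le>m. \<bar>d j\<bar> \<le> C * real m ^ j / fact j)))" if \<kappa>: "\<kappa> > 0" for \<kappa> :: real
  proof -
    have G: "Gamma \<kappa> > 0" using \<kappa> by (rule Gamma_real_pos)
    define h where "h \<theta> = \<theta> powr (\<kappa>-1) / Gamma \<kappa> * (\<mu>/2) powr (-\<kappa>) * exp (-\<delta> * \<theta>)" for \<theta>
    define Hf where "Hf \<theta> = indicator {0..} \<theta> * h \<theta>" for \<theta>
    have Hf0: "Hf \<theta> \<ge> 0" for \<theta> using G by (simp add: Hf_def h_def indicator_def)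
    have Hint: "integrable lborel Hf"
    proof -
      have "integrable lborel (\<lambda>\<theta>. ((\<mu>/2) powr (-\<kappa>) / Gamma \<kappa>) * (indicator {0..} \<theta> * (\<theta> powr (\<kappa>-1) * exp(-\<delta>*\<theta>))))"
        using gamma_int[OF \<kappa> \<delta>] by simp
      moreover have "(\<lambda>\<theta>. ((\<mu>/2) powr (-\<kappa>) / Gamma \<kappa>) * (indicator {0..} \<theta> * (\<theta> powr (\<kappa>-1) * exp(-\<delta>*\<theta>)))) = Hf"
        by (auto simp: Hf_def h_def fun_eq_iff)
      ultimately show ?thesis by simp
    qed
    define H where "H = integral\<^sup>L lborel Hf"
    have H0: "H \<ge> 0" unfolding H_def using Hf0 by simp
    have gb: "norm (gk \<kappa> L U \<theta> u) \<le> h \<theta>" if "\<theta> \<ge> 0" "norm u \<le> r" for \<theta> u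
      using gk_bound[OF assms \<kappa> that(1)] that(2) by (simp add: h_def r_def \<mu>_def \<Delta>_def \<delta>_def)
    have gkm: "(\<lambda>\<theta>. gk \<kappa> L U \<theta> u) \<in> borel_measurable lborel" for u
      unfolding gk_def by measurable
    show "\<exists>C>0. \<forall>m::nat. m \<ge> 2 \<longrightarrow>
        (\<forall>\<psi>::real \<Rightarrow> real. \<psi> \<in> borel_measurable (restrict_space borel {0..}) \<longrightarrow>
           (\<forall>\<theta>\<ge>0. \<bar>\<psi> \<theta>\<bar> \<le> 1) \<longrightarrow>
           (\<exists>d::nat \<Rightarrow> real.
              (\<forall>u\<in>{-1..1}. \<bar>q_psi \<kappa> L U \<psi> u - (\<Sum>j\<le>m. d j * u ^ j)\<bar> \<le> C * (1/r) ^ m) \<and>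
              (\<forall>j\<le>m. \<bar>d j\<bar> \<le> C * real m ^ j / fact j)))"
    proof (intro exI[of _ "H / (1 - 1/r) + 1"] conjI allI impI)
      have r1': "1 - 1/r > 0" using r1 by simp
      show "H / (1 - 1/r) + 1 > 0" using H0 r1' by (simp add: add_nonneg_pos)
      fix m :: nat and \<psi> :: "real \<Rightarrow> real"
      assume m: "2 \<le> m" and \<psi>m: "\<psi> \<in> borel_measurable (restrict_space borel {0..})"
        and \<psi>b: "\<forall>\<theta>\<ge>0. \<bar>\<psi> \<theta>\<bar> \<le> 1"
      define F where "F \<theta> = indicator {0..} \<theta> * \<psi> \<theta>" for \<theta>
      have Fm: "F \<in> borel_measurable lborel"
        using \<psi>m borel_measurable_restrict_space_iff[of "{0..}" borel \<psi>]
        by (simp add: F_def[abs_def])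
      have Fb: "\<bar>F \<theta>\<bar> \<le> 1" and F0: "\<theta> < 0 \<Longrightarrow> F \<theta> = 0" for \<theta>
        using \<psi>b by (auto simp: F_def indicator_def)
      define c where "c \<theta> j = (deriv^^j) (gk \<kappa> L U \<theta>) 0 / fact j" for \<theta> j
      define d where "d j = integral\<^sup>L lborel (\<lambda>\<theta>. F \<theta> * Re (c \<theta> j))" for j
      have cm: "(\<lambda>\<theta>. Re (c \<theta> j)) \<in> borel_measurable lborel" for j
      proof -
        have "(\<lambda>\<theta>. (deriv^^j) (gk \<kappa> L U \<theta>) 0) \<in> borel_measurable lborel"
          by (rule meas_deriv[OF hol gkm]) (use rR r1 in auto)
        then show ?thesis unfolding c_def by measurable
      qed
      have cb: "\<bar>F \<theta> * Re (c \<theta> j)\<bar> \<le> Hf \<theta> * (1/r)^j" for \<theta> j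
      proof (cases "\<theta> \<ge> 0")
        case True
        have "\<bar>Re (c \<theta> j)\<bar> \<le> norm (c \<theta> j)" by (rule abs_Re_le_cmod)
        also have "\<dots> \<le> h \<theta> / r^j" unfolding c_def
          by (rule coeff_bound[OF hol _ rR gb[OF True]]) (use r1 in auto)
        finally have "\<bar>F \<theta> * Re (c \<theta> j)\<bar> \<le> 1 * (h \<theta> / r^j)"
          unfolding abs_mult by (intro mult_mono Fb) auto
        then show ?thesis using True by (simp add: Hf_def power_divide)
      next
        case False
        then show ?thesis using F0[of \<theta>] Hf0[of \<theta>] r1 by simp
      qed
      have ci: "integrable lborel (\<lambda>\<theta>. F \<theta> * Re (c \<theta> j))" for j
      proof (rule Bochner_Integration.integrable_bound)
        show "integrable lborel (\<lambda>\<theta>. Hf \<theta> * (1/r)^j)" using Hint by simp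
        show "(\<lambda>\<theta>. F \<theta> * Re (c \<theta> j)) \<in> borel_measurable lborel" using Fm cm by measurable
        show "AE \<theta> in lborel. norm (F \<theta> * Re (c \<theta> j)) \<le> norm (Hf \<theta> * (1/r)^j)"
          using cb Hf0 r1 by (intro AE_I2) (simp add: abs_mult)
      qed
      show "\<exists>d::nat \<Rightarrow> real.
              (\<forall>u\<in>{-1..1}. \<bar>q_psi \<kappa> L U \<psi> u - (\<Sum>j\<le>m. d j * u ^ j)\<bar> \<le> (H / (1 - 1/r) + 1) * (1/r) ^ m) \<and>
              (\<forall>j\<le>m. \<bar>d j\<bar> \<le> (H / (1 - 1/r) + 1) * real m ^ j / fact j)"
      proof (intro exI[of _ d] conjI ballI allI impI)
        fix u :: real assume u: "u \<in> {-1..1}"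
        define z where "z = zc L U + halfw L U * u"
        have zab: "endA U \<le> z" "z \<le> endB L"
        proof -
          have "halfw L U * u \<ge> halfw L U * (-1)" "halfw L U * u \<le> halfw L U * 1"
            using u g(4) by (intro mult_left_mono; simp)+
          then show "endA U \<le> z" "z \<le> endB L" using g(5,6) by (auto simp: z_def)
        qed
        have z0: "z > 0" "z < 1" using zab g(1,3) by auto
        have uc: "norm (complex_of_real u) \<le> 1" using u by auto
        have pw: "(1 - z) powr (-\<kappa>) * ((1 - z) / z) powr \<kappa> = z powr (-\<kappa>)"
        proof -
          have "(1 - z) powr \<kappa> > 0" "z powr \<kappa> > 0" using z0 by auto
          then show ?thesis using z0
            by (simp add: powr_divide powr_minus field_simps)
        qed
        have q: "q_psi \<kappa> L U \<psi> u = integral\<^sup>L lborel (\<lambda>\<theta>. F \<theta> * Re (gk \<kappa> L U \<theta> (complex_of_real u)))"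
        proof -
          have "q_psi \<kappa> L U \<psi> u = (1 - z) powr (-\<kappa>) * integral\<^sup>L lborel (\<lambda>\<theta>. indicator {0..} \<theta> *
               (\<psi> \<theta> * (\<theta> powr (\<kappa> - 1) / Gamma \<kappa>) * ((1 - z) / z) powr \<kappa> * exp (- \<theta> * (1 - z) / z)))"
            unfolding q_psi_def R_psi_def T_psi_def set_lebesgue_integral_def z_def by simp
          also have "\<dots> = integral\<^sup>L lborel (\<lambda>\<theta>. (1 - z) powr (-\<kappa>) * (indicator {0..} \<theta> *
               (\<psi> \<theta> * (\<theta> powr (\<kappa> - 1) / Gamma \<kappa>) * ((1 - z) / z) powr \<kappa> * exp (- \<theta> * (1 - z) / z))))"
            by simp
          also have "\<dots> = integral\<^sup>L lborel (\<lambda>\<theta>. F \<theta> * Re (gk \<kappa> L U \<theta> (complex_of_real u)))"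
          proof (rule Bochner_Integration.integral_cong[OF refl])
            fix \<theta> :: real
            have "(1 - z) powr (-\<kappa>) * (indicator {0..} \<theta> *
               (\<psi> \<theta> * (\<theta> powr (\<kappa> - 1) / Gamma \<kappa>) * ((1 - z) / z) powr \<kappa> * exp (- \<theta> * (1 - z) / z)))
              = F \<theta> * (\<theta> powr (\<kappa> - 1) / Gamma \<kappa> * ((1 - z) powr (-\<kappa>) * ((1 - z) / z) powr \<kappa>) * exp (- \<theta> * (1 - z) / z))"
              by (simp add: F_def)
            also have "\<dots> = F \<theta> * Re (gk \<kappa> L U \<theta> (complex_of_real u))"
              unfolding pw gk_real[OF z_def z0(1)] by simp
            finally show "(1 - z) powr (-\<kappa>) * (indicator {0..} \<theta> *
               (\<psi> \<theta> * (\<theta> powr (\<kappa> - 1) / Gamma \<kappa>) * ((1 - z) / z) powr \<kappa> * exp (- \<theta> * (1 - z) / z)))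
              = F \<theta> * Re (gk \<kappa> L U \<theta> (complex_of_real u))" .
          qed
          finally show ?thesis .
        qed
        have gi: "integrable lborel (\<lambda>\<theta>. F \<theta> * Re (gk \<kappa> L U \<theta> (complex_of_real u)))"
        proof (rule Bochner_Integration.integrable_bound)
          show "integrable lborel Hf" by (rule Hint)
          show "(\<lambda>\<theta>. F \<theta> * Re (gk \<kappa> L U \<theta> (complex_of_real u))) \<in> borel_measurable lborel"
            using Fm gkm by measurable
          show "AE \<theta> in lborel. norm (F \<theta> * Re (gk \<kappa> L U \<theta> (complex_of_real u))) \<le> norm (Hf \<theta>)"
          proof (intro AE_I2)
            fix \<theta> :: real
            show "norm (F \<theta> * Re (gk \<kappa> L U \<theta> (complex_of_real u))) \<le> norm (Hf \<theta>)"
            proof (cases "\<theta> \<ge> 0")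
              case True
              have "\<bar>Re (gk \<kappa> L U \<theta> (complex_of_real u))\<bar> \<le> h \<theta>"
                using abs_Re_le_cmod[of "gk \<kappa> L U \<theta> (complex_of_real u)"] gb[OF True, of "complex_of_real u"] uc r1 by linarith
              then have "\<bar>F \<theta> * Re (gk \<kappa> L U \<theta> (complex_of_real u))\<bar> \<le> 1 * h \<theta>"
                unfolding abs_mult by (intro mult_mono Fb) auto
              then show ?thesis using True Hf0[of \<theta>] by (simp add: Hf_def)
            next
              case False then show ?thesis using F0[of \<theta>] by simp
            qed
          qed
        qed
        define K where "K = (1/r)^(Suc m) / (1 - 1/r)"
        have K0: "K \<ge> 0" unfolding K_def using r1 r1' by (intro divide_nonneg_pos) auto
        define E where "E \<theta> = F \<theta> * Re (gk \<kappa> L U \<theta> (complex_of_real u)) - (\<Sum>j\<le>m. F \<theta> * Re (c \<theta> j) * u^j)" for \<theta>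
        have Ei: "integrable lborel E" unfolding E_def[abs_def]
          using gi ci by (intro Bochner_Integration.integrable_diff Bochner_Integration.integrable_sum integrable_mult_left) auto
        have qE: "q_psi \<kappa> L U \<psi> u - (\<Sum>j\<le>m. d j * u ^ j) = integral\<^sup>L lborel E"
        proof -
          have "(\<Sum>j\<le>m. d j * u ^ j) = integral\<^sup>L lborel (\<lambda>\<theta>. \<Sum>j\<le>m. F \<theta> * Re (c \<theta> j) * u^j)"
            unfolding d_def using ci
            by (subst Bochner_Integration.integral_sum) (auto intro: integrable_mult_left)
          then show ?thesis unfolding q E_def[abs_def] using gi ci
            by (subst Bochner_Integration.integral_diff) (auto intro!: Bochner_Integration.integrable_sum integrable_mult_left)
        qed
        have Eb: "\<bar>E \<theta>\<bar> \<le> Hf \<theta> * K" for \<theta>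
        proof (cases "\<theta> \<ge> 0")
          case True
          have "E \<theta> = F \<theta> * Re (gk \<kappa> L U \<theta> (complex_of_real u) - (\<Sum>j\<le>m. (deriv^^j) (gk \<kappa> L U \<theta>) 0 / fact j * (complex_of_real u)^j))"
          proof -
            have s1: "(\<Sum>j\<le>m. F \<theta> * Re (c \<theta> j) * u^j) = F \<theta> * (\<Sum>j\<le>m. Re (c \<theta> j) * u^j)"
              by (simp add: sum_distrib_left algebra_simps)
            have s2: "(\<Sum>j\<le>m. Re (c \<theta> j) * u^j) = Re (\<Sum>j\<le>m. c \<theta> j * (complex_of_real u)^j)"
              unfolding Re_sum
            proof (rule sum.cong[OF refl])
              fix j
              have "c \<theta> j * (complex_of_real u)^j = c \<theta> j * complex_of_real (u^j)" by simp
              then show "Re (c \<theta> j) * u^j = Re (c \<theta> j * (complex_of_real u)^j)"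
                by simp
            qed
            show ?thesis unfolding E_def s1 s2 by (simp add: c_def algebra_simps)
          qed
          also have "\<bar>\<dots>\<bar> \<le> 1 * (h \<theta> * (1/r)^(Suc m) / (1 - 1/r))"
            unfolding abs_mult
          proof (intro mult_mono Fb)
            show "\<bar>Re (gk \<kappa> L U \<theta> (complex_of_real u) - (\<Sum>j\<le>m. (deriv^^j) (gk \<kappa> L U \<theta>) 0 / fact j * (complex_of_real u)^j))\<bar>
                  \<le> h \<theta> * (1/r)^(Suc m) / (1 - 1/r)"
              using abs_Re_le_cmod taylor_err[OF hol r1 rR gb[OF True] uc, of m] order_trans by blast
          qed auto
          finally show ?thesis using True by (simp add: Hf_def K_def)
        next
          case False then show ?thesis using F0[of \<theta>] by (simp add: E_def Hf_def)
        qed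
        have "\<bar>q_psi \<kappa> L U \<psi> u - (\<Sum>j\<le>m. d j * u ^ j)\<bar> \<le> integral\<^sup>L lborel (\<lambda>\<theta>. Hf \<theta> * K)"
          unfolding qE by (rule integral_abs_bound_integral[OF Ei _ Eb]) (use Hint in simp)
        also have "\<dots> = H * K" by (simp add: H_def)
        also have "\<dots> \<le> (H / (1 - 1/r) + 1) * (1/r) ^ m"
        proof -
          have "H * K = H / (1 - 1/r) * (1/r)^(Suc m)" by (simp add: K_def)
          also have "\<dots> \<le> H / (1 - 1/r) * (1/r)^m"
          proof (rule mult_left_mono)
            show "(1/r)^(Suc m) \<le> (1/r)^m" by (rule power_decreasing) (use r1 in auto)
            show "0 \<le> H / (1 - 1/r)" using H0 r1' by simp
          qed
          also have "\<dots> \<le> (H / (1 - 1/r) + 1) * (1/r)^m"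
            using r1 by (intro mult_right_mono) auto
          finally show ?thesis .
        qed
        finally show "\<bar>q_psi \<kappa> L U \<psi> u - (\<Sum>j\<le>m. d j * u ^ j)\<bar> \<le> (H / (1 - 1/r) + 1) * (1/r) ^ m" .
      next
        fix j assume j: "j \<le> m"
        have "\<bar>d j\<bar> \<le> integral\<^sup>L lborel (\<lambda>\<theta>. Hf \<theta> * (1/r)^j)"
          unfolding d_def by (rule integral_abs_bound_integral[OF ci _ cb]) (use Hint in simp)
        also have "\<dots> = H * (1/r)^j" by (simp add: H_def)
        also have "\<dots> \<le> H * 1" using H0 r1 by (intro mult_left_mono) (auto simp: power_le_one)
        also have "\<dots> \<le> (H / (1 - 1/r) + 1) * 1"
        proof -
          have "H \<le> H / (1 - 1/r)" using H0 r1 r1' by (simp add: field_simps)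
          then show ?thesis by simp
        qed
        also have "\<dots> \<le> (H / (1 - 1/r) + 1) * (real m ^ j / fact j)"
        proof (rule mult_left_mono)
          have "fact j \<le> (of_nat (j^j) :: real)" by (rule fact_le_power)
          also have "\<dots> \<le> real m ^ j" by (simp add: j power_mono)
          finally show "1 \<le> real m ^ j / fact j" by simp
          show "0 \<le> H / (1 - 1/r) + 1" using H0 r1' by simp
        qed
        finally show "\<bar>d j\<bar> \<le> (H / (1 - 1/r) + 1) * real m ^ j / fact j" by simp
      qed
    qed
  qed
  show ?thesis
    apply (rule exI[of _ "1/r"])
    using r1 main by auto
qed

end
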